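(* Let $X$ be a finite set and $k$ an integer with $k\ge 5$ and $|X|-k\ge 7$. Let $\mathcal{F}$ be a clone on $X$ such that either $g^*\in\mathcal{F}$, where $g^*(x_1,x_2,x_3)=x_2$ if $x_2=x_3$ and $g^*(x_1,x_2,x_3)=x_1$ otherwise, or (weaker) for every one-to-one $\bar a^*\in X^3$ there is $g_{\bar a^*}\in\mathcal{F}$ with $g_{\bar a^*}(\bar a^* )=a^*_1$ and $g_{\bar a^*}(\bar a)=g^*(\bar a)$ for every $\bar a\in X^3$ with a repetition. Let $\mathfrak{C}$ be a nonempty symmetric family of choice functions for $\binom{X}{k}$ closed under every $f\in\mathcal{F}$. Then $\mathfrak{C}$ is full.
   Context: A clone on $X$: set of finitary operations on $X$ containing all projections and closed under composition. $\binom{X}{k}=\{Y\subseteq X:|Y|=k\}$; a choice function $c$ satisfies $c(Y)\in Y$. Symmetric: for every permutation $\pi$ of $X$ and $c\in\mathfrak{C}$, $(\pi*c)(Y)=\pi^{-1}(c(\pi(Y)))$ is in $\mathfrak{C}$. Closed under $f$ ($n$-place): for $c_1,\dots,c_n\in\mathfrak{C}$, $Y\mapsto f(c_1(Y),\dots,c_n(Y))$ is in $\mathfrak{C}$. Full: every choice function for $\binom{X}{k}$ is in $\mathfrak{C}$. *)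

theory Defs
  imports Main
begin

text \<open>A finitary operation on X is represented as a pair (n, f) with n > 0 its arity
  and f :: 'a list => 'a, where only the values on lists of length n over X matter.\<close>

definition tuples :: "'a set \<Rightarrow> nat \<Rightarrow> 'a list set" where
  "tuples X n = {xs. length xs = n \<and> set xs \<subseteq> X}"

definition clone_on :: "'a set \<Rightarrow> (nat \<times> ('a list \<Rightarrow> 'a)) set \<Rightarrow> bool" where
  "clone_on X F \<longleftrightarrow>
     (\<forall>(n, f) \<in> F. 0 < n \<and> (\<forall>xs \<in> tuples X n. f xs \<in> X)) \<and>
     (\<forall>n i. i < n \<longrightarrow> (n, \<lambda>xs. xs ! i) \<in> F) \<and>
     (\<forall>(m, f) \<in> F. \<forall>n gs. 0 < n \<and> length gs = m \<and> (\<forall>g \<in> set gs. (n, g) \<in> F) \<longrightarrow>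
        (n, \<lambda>xs. f (map (\<lambda>g. g xs) gs)) \<in> F)"

definition gstar :: "'a list \<Rightarrow> 'a" where
  "gstar xs = (if xs ! 1 = xs ! 2 then xs ! 1 else xs ! 0)"

definition binom :: "'a set \<Rightarrow> nat \<Rightarrow> 'a set set" where
  "binom X k = {Y. Y \<subseteq> X \<and> finite Y \<and> card Y = k}"

definition choice_fun :: "'a set \<Rightarrow> nat \<Rightarrow> ('a set \<Rightarrow> 'a) \<Rightarrow> bool" where
  "choice_fun X k c \<longleftrightarrow> (\<forall>Y \<in> binom X k. c Y \<in> Y) \<and> (\<forall>Y. Y \<notin> binom X k \<longrightarrow> c Y = undefined)"

definition perm_act :: "'a set \<Rightarrow> nat \<Rightarrow> ('a \<Rightarrow> 'a) \<Rightarrow> ('a set \<Rightarrow> 'a) \<Rightarrow> ('a set \<Rightarrow> 'a)" where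
  "perm_act X k \<pi> c = (\<lambda>Y. if Y \<in> binom X k then the_inv_into X \<pi> (c (\<pi> ` Y)) else undefined)"

definition symmetric_family :: "'a set \<Rightarrow> nat \<Rightarrow> ('a set \<Rightarrow> 'a) set \<Rightarrow> bool" where
  "symmetric_family X k C \<longleftrightarrow>
     (\<forall>\<pi> c. bij_betw \<pi> X X \<and> c \<in> C \<longrightarrow> perm_act X k \<pi> c \<in> C)"

definition closed_under :: "'a set \<Rightarrow> nat \<Rightarrow> ('a set \<Rightarrow> 'a) set \<Rightarrow> nat \<times> ('a list \<Rightarrow> 'a) \<Rightarrow> bool" where
  "closed_under X k C nf \<longleftrightarrow>
     (\<forall>cs. length cs = fst nf \<and> set cs \<subseteq> C \<longrightarrow>
        (\<lambda>Y. if Y \<in> binom X k then snd nf (map (\<lambda>c. c Y) cs) else undefined) \<in> C)"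

definition full_family :: "'a set \<Rightarrow> nat \<Rightarrow> ('a set \<Rightarrow> 'a) set \<Rightarrow> bool" where
  "full_family X k C \<longleftrightarrow> (\<forall>c. choice_fun X k c \<longrightarrow> c \<in> C)"

end

theory Submission
  imports Defs
begin

lemma perm_lab:
  assumes fin: "finite X" and cd: "\<And>l. card {x\<in>X. L1 x = l} = card {x\<in>X. L2 x = l}"
  shows "\<exists>p. bij_betw p X X \<and> (\<forall>x\<in>X. L2 (p x) = L1 x)"
proof -
  have "\<forall>l. \<exists>f. bij_betw f {x\<in>X. L1 x = l} {x\<in>X. L2 x = l}"
  proof
    fix l
    show "\<exists>f. bij_betw f {x\<in>X. L1 x = l} {x\<in>X. L2 x = l}"
      by (rule finite_same_card_bij) (use fin cd in auto)
  qed
  then obtain F where F: "\<And>l. bij_betw (F l) {x\<in>X. L1 x = l} {x\<in>X. L2 x = l}" by metis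
  define p where "p x = F (L1 x) x" for x
  have lab: "p x \<in> X \<and> L2 (p x) = L1 x" if "x \<in> X" for x
  proof -
    have "x \<in> {y\<in>X. L1 y = L1 x}" using that by simp
    hence "F (L1 x) x \<in> {y\<in>X. L2 y = L1 x}" using F[of "L1 x"] bij_betwE by blast
    thus ?thesis by (simp add: p_def)
  qed
  have inj: "inj_on p X"
  proof (rule inj_onI)
    fix x y assume xy: "x \<in> X" "y \<in> X" "p x = p y"
    hence l: "L1 x = L1 y" using lab[of x] lab[of y] by simp
    have "inj_on (F (L1 x)) {z\<in>X. L1 z = L1 x}" using F bij_betw_def by blast
    moreover have "F (L1 x) x = F (L1 x) y" using xy l by (simp add: p_def)
    ultimately show "x = y" using xy l inj_onD[of "F (L1 x)" "{z\<in>X. L1 z = L1 x}" x y] by simp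
  qed
  have surj: "p ` X = X"
  proof
    show "p ` X \<subseteq> X" using lab by auto
    show "X \<subseteq> p ` X"
    proof
      fix z assume z: "z \<in> X"
      have "z \<in> {y\<in>X. L2 y = L2 z}" using z by simp
      also have "{y\<in>X. L2 y = L2 z} = F (L2 z) ` {y\<in>X. L1 y = L2 z}"
        using F[of "L2 z"] unfolding bij_betw_def by simp
      finally obtain x where x: "x \<in> {y\<in>X. L1 y = L2 z}" "F (L2 z) x = z"
        by (metis (no_types, lifting) imageE)
      hence "p x = z" by (simp add: p_def)
      thus "z \<in> p ` X" using x by auto
    qed
  qed
  have "bij_betw p X X" using inj surj by (simp add: bij_betw_def)
  thus ?thesis using lab by blast
qed


lemma card2: "card ({p,q} \<inter> S) = (if p \<in> S then 1 else 0) + (if q \<in> S \<and> q \<noteq> p then 1 else 0)"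
  by (cases "p \<in> S"; cases "q \<in> S"; cases "p = q") (simp_all add: Int_insert_left)

lemma card_single: "y \<in> X \<Longrightarrow> (\<And>x. P x \<Longrightarrow> x = y) \<Longrightarrow> card {x\<in>X. P x} = (if P y then 1 else 0)"
proof -
  assume a: "y \<in> X" "\<And>x. P x \<Longrightarrow> x = y"
  have "{x\<in>X. P x} = (if P y then {y} else {})"
  proof (cases "P y")
    case True
    hence "{x\<in>X. P x} = {y}" using a by blast
    thus ?thesis using True by simp
  next
    case False
    hence "{x\<in>X. P x} = {}" using a by blast
    thus ?thesis using False by simp
  qed
  thus ?thesis by simp
qed

lemma card_lab:
  assumes fin: "finite X" and sub: "Y1 \<subseteq> X" "Y2 \<subseteq> X" "Z1 \<subseteq> X" "Z2 \<subseteq> X"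
    and c: "card Y1 = card Z1" "card Y2 = card Z2" "card (Y1 \<inter> Y2) = card (Z1 \<inter> Z2)"
    and m: "y1 \<in> Y1" "y2 \<in> Y2" "z1 \<in> Z1" "z2 \<in> Z2"
    and i: "(y1 \<in> Y2) = (z1 \<in> Z2)" "(y2 \<in> Y1) = (z2 \<in> Z1)" "(y1 = y2) = (z1 = z2)"
  shows "card {x\<in>X. (x\<in>Y1, x\<in>Y2, x=y1, x=y2) = l} = card {x\<in>X. (x\<in>Z1, x\<in>Z2, x=z1, x=z2) = l}"
proof -
  obtain a b cc d where l: "l = (a,b,cc,d)" by (cases l) auto
  have fY: "finite Y1" "finite Y2" "finite Z1" "finite Z2" using sub fin by (auto intro: finite_subset)
  define RY where "RY = {x\<in>X. (x\<in>Y1) = a \<and> (x\<in>Y2) = b}"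
  define RZ where "RZ = {x\<in>X. (x\<in>Z1) = a \<and> (x\<in>Z2) = b}"
  have cR: "card RY = card RZ"
  proof (cases a; cases b)
    assume "a" "b"
    hence "RY = Y1 \<inter> Y2" "RZ = Z1 \<inter> Z2" using sub by (auto simp: RY_def RZ_def)
    thus ?thesis using c by simp
  next
    assume "a" "\<not>b"
    hence "RY = Y1 - Y2" "RZ = Z1 - Z2" using sub by (auto simp: RY_def RZ_def)
    thus ?thesis using c fY by (simp add: card_Diff_subset_Int)
  next
    assume "\<not>a" "b"
    hence "RY = Y2 - Y1" "RZ = Z2 - Z1" using sub by (auto simp: RY_def RZ_def)
    thus ?thesis using c fY by (simp add: card_Diff_subset_Int Int_commute)
  next
    assume "\<not>a" "\<not>b"
    hence "RY = X - (Y1 \<union> Y2)" "RZ = X - (Z1 \<union> Z2)" using sub by (auto simp: RY_def RZ_def)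
    moreover have "card (Y1 \<union> Y2) = card (Z1 \<union> Z2)"
      using card_Un_Int[of Y1 Y2] card_Un_Int[of Z1 Z2] fY c by linarith
    ultimately show ?thesis using fin sub fY by (simp add: card_Diff_subset)
  qed
  show ?thesis
  proof (cases cc)
    case True
    have "card {x\<in>X. (x\<in>Y1, x\<in>Y2, x=y1, x=y2) = l} = (if (y1\<in>Y1, y1\<in>Y2, y1=y1, y1=y2) = l then 1 else 0)"
      by (rule card_single) (use True l m sub in auto)
    moreover have "card {x\<in>X. (x\<in>Z1, x\<in>Z2, x=z1, x=z2) = l} = (if (z1\<in>Z1, z1\<in>Z2, z1=z1, z1=z2) = l then 1 else 0)"
      by (rule card_single) (use True l m sub in auto)
    ultimately show ?thesis using i m by simp
  next
    case False
    show ?thesis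
    proof (cases d)
      case True
      have "card {x\<in>X. (x\<in>Y1, x\<in>Y2, x=y1, x=y2) = l} = (if (y2\<in>Y1, y2\<in>Y2, y2=y1, y2=y2) = l then 1 else 0)"
        by (rule card_single) (use True l m sub in auto)
      moreover have "card {x\<in>X. (x\<in>Z1, x\<in>Z2, x=z1, x=z2) = l} = (if (z2\<in>Z1, z2\<in>Z2, z2=z1, z2=z2) = l then 1 else 0)"
        by (rule card_single) (use True l m sub in auto)
      ultimately show ?thesis using i m by (simp add: eq_commute)
    next
      case dF: False
      have e1: "{x\<in>X. (x\<in>Y1, x\<in>Y2, x=y1, x=y2) = l} = RY - {y1,y2}"
        using dF False l by (auto simp: RY_def)
      have e2: "{x\<in>X. (x\<in>Z1, x\<in>Z2, x=z1, x=z2) = l} = RZ - {z1,z2}"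
        using dF False l by (auto simp: RZ_def)
      have "(y1 \<in> RY) = (z1 \<in> RZ)" "(y2 \<in> RY) = (z2 \<in> RZ)"
        using m i sub unfolding RY_def RZ_def by blast+
      hence "card ({y1,y2} \<inter> RY) = card ({z1,z2} \<inter> RZ)"
        unfolding card2 using i(3) by (simp only:) auto
      moreover have "finite RY" "finite RZ" using fin by (auto simp: RY_def RZ_def)
      moreover have "card (RY - {y1,y2}) = card RY - card ({y1,y2} \<inter> RY)"
        using card_Diff_subset_Int[of RY "{y1,y2}"] by (simp add: Int_commute)
      moreover have "card (RZ - {z1,z2}) = card RZ - card ({z1,z2} \<inter> RZ)"
        using card_Diff_subset_Int[of RZ "{z1,z2}"] by (simp add: Int_commute)
      ultimately show ?thesis unfolding e1 e2 using cR by simp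
    qed
  qed
qed

lemma two_elems: assumes "2 \<le> card S" obtains a b where "a \<in> S" "b \<in> S" "a \<noteq> b"
proof -
  obtain T where "T \<subseteq> S" "card T = 2" using obtain_subset_with_card_n[OF assms] by metis
  thus ?thesis using that card_2_iff[of T] by auto
qed

lemma three_elems: assumes "3 \<le> card S" obtains a b c where "a \<in> S" "b \<in> S" "c \<in> S" "a \<noteq> b" "b \<noteq> c" "a \<noteq> c"
proof -
  obtain T where "T \<subseteq> S" "card T = 3" using obtain_subset_with_card_n[OF assms] by metis
  thus ?thesis using that card_3_iff[of T] by auto
qed

lemma one_elem: assumes "1 \<le> card S" obtains a where "a \<in> S"
  using assms by (metis card.empty ex_in_conv not_one_le_zero)

lemma image_eq_bij:
  assumes "bij_betw p X X" "Y \<subseteq> X" "Z \<subseteq> X" "\<forall>x\<in>X. (p x \<in> Z) = (x \<in> Y)"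
  shows "p ` Y = Z"
proof
  show "p ` Y \<subseteq> Z" using assms by auto
  show "Z \<subseteq> p ` Y"
  proof
    fix z assume z: "z \<in> Z"
    hence "z \<in> p ` X" using assms(1,3) unfolding bij_betw_def by auto
    then obtain x where "x \<in> X" "z = p x" by auto
    thus "z \<in> p ` Y" using assms(4) z by auto
  qed
qed

locale cf =
  fixes X :: "'a set" and k :: nat and C :: "('a set \<Rightarrow> 'a) set"
  assumes finX: "finite X" and k5: "5 \<le> k"
    and Cne: "C \<noteq> {}" and Cch: "\<forall>c\<in>C. choice_fun X k c"
    and symm: "symmetric_family X k C"
    and maj: "\<And>a. a \<in> tuples X 3 \<Longrightarrow> \<exists>g. (distinct a \<longrightarrow> g a = a!0)
        \<and> (\<forall>b\<in>tuples X 3. \<not> distinct b \<longrightarrow> g b = gstar b)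
        \<and> (\<forall>c1\<in>C. \<forall>c2\<in>C. \<forall>c3\<in>C. (\<lambda>Y. if Y \<in> binom X k then g [c1 Y, c2 Y, c3 Y] else undefined) \<in> C)"
begin

lemma binom_iff: "Y \<in> binom X k \<longleftrightarrow> Y \<subseteq> X \<and> card Y = k"
  using finX by (auto simp: binom_def intro: finite_subset)

lemma cval: "c \<in> C \<Longrightarrow> Y \<in> binom X k \<Longrightarrow> c Y \<in> Y"
  using Cch by (auto simp: choice_fun_def)

lemma cvalX: "c \<in> C \<Longrightarrow> Y \<in> binom X k \<Longrightarrow> c Y \<in> X"
  using cval binom_iff by blast

definition R where "R Y1 Y2 y1 y2 \<longleftrightarrow> (\<exists>c\<in>C. c Y1 = y1 \<and> c Y2 = y2)"

lemma Rswap: "R Y1 Y2 a b = R Y2 Y1 b a"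
  by (auto simp: R_def)

lemma TR:
  assumes b: "Y1 \<in> binom X k" "Y2 \<in> binom X k" "Z1 \<in> binom X k" "Z2 \<in> binom X k"
    and ci: "card (Y1 \<inter> Y2) = card (Z1 \<inter> Z2)"
    and m: "y1 \<in> Y1" "y2 \<in> Y2" "z1 \<in> Z1" "z2 \<in> Z2"
    and i: "(y1 \<in> Y2) = (z1 \<in> Z2)" "(y2 \<in> Y1) = (z2 \<in> Z1)" "(y1 = y2) = (z1 = z2)"
    and r: "R Z1 Z2 z1 z2"
  shows "R Y1 Y2 y1 y2"
proof -
  have sub: "Y1 \<subseteq> X" "Y2 \<subseteq> X" "Z1 \<subseteq> X" "Z2 \<subseteq> X" and cc: "card Y1 = card Z1" "card Y2 = card Z2"
    using b binom_iff by auto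
  obtain p where p: "bij_betw p X X" "\<forall>x\<in>X. (p x \<in> Z1, p x \<in> Z2, p x = z1, p x = z2) = (x \<in> Y1, x \<in> Y2, x = y1, x = y2)"
    using perm_lab[OF finX card_lab[OF finX sub cc ci m i]] by blast
  have pY1: "p ` Y1 = Z1" by (rule image_eq_bij[OF p(1) sub(1) sub(3)]) (use p(2) in auto)
  have pY2: "p ` Y2 = Z2" by (rule image_eq_bij[OF p(1) sub(2) sub(4)]) (use p(2) in auto)
  have py1: "p y1 = z1" using p(2) m sub by auto
  have py2: "p y2 = z2" using p(2) m sub by auto
  obtain c where c: "c \<in> C" "c Z1 = z1" "c Z2 = z2" using r by (auto simp: R_def)
  have c'C: "perm_act X k p c \<in> C" using symm p(1) c(1) by (auto simp: symmetric_family_def)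
  have inj: "inj_on p X" using p(1) bij_betw_def by blast
  have "perm_act X k p c Y1 = y1"
    using b(1) pY1 c(2) py1 the_inv_into_f_f[OF inj, of y1] m sub by (auto simp: perm_act_def) 
  moreover have "perm_act X k p c Y2 = y2"
    using b(2) pY2 c(3) py2 the_inv_into_f_f[OF inj, of y2] m sub by (auto simp: perm_act_def) 
  ultimately show ?thesis using c'C by (auto simp: R_def)
qed

lemma unary: "Y \<in> binom X k \<Longrightarrow> y \<in> Y \<Longrightarrow> R Y Y y y"
proof -
  assume a: "Y \<in> binom X k" "y \<in> Y"
  obtain c where c: "c \<in> C" using Cne by auto
  have r: "R Y Y (c Y) (c Y)" using c by (auto simp: R_def)
  show ?thesis by (rule TR[OF a(1) a(1) a(1) a(1) refl a(2) a(2) cval[OF c a(1)] cval[OF c a(1)]]) (use a cval[OF c a(1)] r in auto)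
qed

lemma partner: "Y1 \<in> binom X k \<Longrightarrow> Y2 \<in> binom X k \<Longrightarrow> q \<in> Y2 \<Longrightarrow> \<exists>p. R Y1 Y2 p q"
  using unary[of Y2 q] by (auto simp: R_def)

lemma gstar_maj: "gstar [p,u,u] = u" "gstar [u,p,u] = u" "gstar [u,u,p] = u"
  by (auto simp: gstar_def)

lemma tup3: "a \<in> X \<Longrightarrow> b \<in> X \<Longrightarrow> c \<in> X \<Longrightarrow> [a,b,c] \<in> tuples X 3"
  by (auto simp: tuples_def)

lemma G1:
  assumes b: "Y1 \<in> binom X k" "Y2 \<in> binom X k"
    and r: "R Y1 Y2 u v" "R Y1 Y2 u v'" "v \<noteq> v'" "q \<in> Y2"
  shows "R Y1 Y2 u q"
proof -
  obtain p where "R Y1 Y2 p q" using partner b r(4) by blast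
  then obtain c1 where c1: "c1 \<in> C" "c1 Y1 = p" "c1 Y2 = q" by (auto simp: R_def)
  obtain c2 where c2: "c2 \<in> C" "c2 Y1 = u" "c2 Y2 = v" using r by (auto simp: R_def)
  obtain c3 where c3: "c3 \<in> C" "c3 Y1 = u" "c3 Y2 = v'" using r by (auto simp: R_def)
  have X: "p \<in> X" "q \<in> X" "u \<in> X" "v \<in> X" "v' \<in> X"
    using cvalX c1 c2 c3 b by metis+
  obtain g where g: "distinct [q,v,v'] \<longrightarrow> g [q,v,v'] = q"
      "\<forall>b\<in>tuples X 3. \<not> distinct b \<longrightarrow> g b = gstar b"
      "\<forall>c1\<in>C. \<forall>c2\<in>C. \<forall>c3\<in>C. (\<lambda>Y. if Y \<in> binom X k then g [c1 Y, c2 Y, c3 Y] else undefined) \<in> C"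
    using maj[OF tup3[OF X(2) X(4) X(5)]] by auto
  define h where "h = (\<lambda>Y. if Y \<in> binom X k then g [c1 Y, c2 Y, c3 Y] else undefined)"
  have hC: "h \<in> C" using g(3) c1 c2 c3 by (simp add: h_def)
  have "h Y1 = g [p,u,u]" using b c1 c2 c3 by (simp add: h_def)
  also have "\<dots> = u" using g(2) tup3[OF X(1) X(3) X(3)] gstar_maj by auto
  finally have h1: "h Y1 = u" .
  have "h Y2 = g [q,v,v']" using b c1 c2 c3 by (simp add: h_def)
  also have "\<dots> = q"
  proof (cases "distinct [q,v,v']")
    case True thus ?thesis using g(1) by simp
  next
    case False thus ?thesis using g(2) tup3[OF X(2) X(4) X(5)] r(3) by (simp add: gstar_def)
  qed
  finally show ?thesis using h1 hC by (auto simp: R_def)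
qed

lemma G2:
  assumes b: "Y1 \<in> binom X k" "Y2 \<in> binom X k"
    and r: "R Y1 Y2 u v" "R Y1 Y2 u' v" "u \<noteq> u'" "p \<in> Y1"
  shows "R Y1 Y2 p v"
  using G1[OF b(2) b(1)] r Rswap by metis

end

context cf begin

lemma BP:
  assumes d: "choice_fun X k d"
    and pr: "\<And>Y1 Y2. Y1 \<in> binom X k \<Longrightarrow> Y2 \<in> binom X k \<Longrightarrow> Y1 \<noteq> Y2 \<Longrightarrow> R Y1 Y2 (d Y1) (d Y2)"
  shows "d \<in> C"
proof -
  have dX: "d Y \<in> X" "d Y \<in> Y" if "Y \<in> binom X k" for Y
    using d that binom_iff unfolding choice_fun_def by auto
  have finB: "finite (binom X k)"
    by (rule finite_subset[of _ "Pow X"]) (use finX binom_iff in auto)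
  have main: "\<forall>S. S \<subseteq> binom X k \<longrightarrow> card S = n \<longrightarrow> (\<exists>c\<in>C. \<forall>Y\<in>S. c Y = d Y)" for n
  proof (induction n rule: less_induct)
    case (less n)
    show ?case
    proof (intro allI impI)
      fix S assume S: "S \<subseteq> binom X k" "card S = n"
      have finS: "finite S" using S finB finite_subset by blast
      have IH: "\<exists>c\<in>C. \<forall>Y\<in>T. c Y = d Y" if "T \<subseteq> S" "card T < n" for T
        using less that S by blast
      show "\<exists>c\<in>C. \<forall>Y\<in>S. c Y = d Y"
      proof (cases "3 \<le> card S")
        case True
        then obtain Y1 Y2 Y3 where Y: "Y1 \<in> S" "Y2 \<in> S" "Y3 \<in> S" "Y1 \<noteq> Y2" "Y2 \<noteq> Y3" "Y1 \<noteq> Y3"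
          by (rule three_elems)
        obtain c1 where c1: "c1 \<in> C" "\<forall>Y\<in>S - {Y1}. c1 Y = d Y"
          using IH[of "S - {Y1}"] card_Diff1_less[OF finS Y(1)] S by auto
        obtain c2 where c2: "c2 \<in> C" "\<forall>Y\<in>S - {Y2}. c2 Y = d Y"
          using IH[of "S - {Y2}"] card_Diff1_less[OF finS Y(2)] S by auto
        obtain c3 where c3: "c3 \<in> C" "\<forall>Y\<in>S - {Y3}. c3 Y = d Y"
          using IH[of "S - {Y3}"] card_Diff1_less[OF finS Y(3)] S by auto
        have Y1B: "Y1 \<in> binom X k" using Y S by auto
        obtain g where g: "\<forall>b\<in>tuples X 3. \<not> distinct b \<longrightarrow> g b = gstar b"
          "\<forall>c1\<in>C. \<forall>c2\<in>C. \<forall>c3\<in>C. (\<lambda>Y. if Y \<in> binom X k then g [c1 Y, c2 Y, c3 Y] else undefined) \<in> C"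
          using maj[OF tup3[OF dX(1)[OF Y1B] dX(1)[OF Y1B] dX(1)[OF Y1B]]] by blast
        define h where "h = (\<lambda>Y. if Y \<in> binom X k then g [c1 Y, c2 Y, c3 Y] else undefined)"
        have hC: "h \<in> C" using g(2) c1 c2 c3 by (simp add: h_def)
        have "h Y = d Y" if YS: "Y \<in> S" for Y
        proof -
          have YB: "Y \<in> binom X k" using YS S by auto
          have cX: "c1 Y \<in> X" "c2 Y \<in> X" "c3 Y \<in> X" using cvalX c1 c2 c3 YB by auto
          have hY: "h Y = g [c1 Y, c2 Y, c3 Y]" using YB by (simp add: h_def)
          have t: "[c1 Y, c2 Y, c3 Y] \<in> tuples X 3" using tup3 cX by auto
          consider "Y = Y1" | "Y = Y2" | "Y = Y3" | "Y \<noteq> Y1 \<and> Y \<noteq> Y2 \<and> Y \<noteq> Y3" by blast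
          thus ?thesis
          proof cases
            case 1
            hence "c2 Y = d Y" "c3 Y = d Y" using c2 c3 YS Y by auto
            thus ?thesis using hY g(1) t gstar_maj by auto
          next
            case 2
            hence "c1 Y = d Y" "c3 Y = d Y" using c1 c3 YS Y by auto
            thus ?thesis using hY g(1) t gstar_maj by auto
          next
            case 3
            hence "c1 Y = d Y" "c2 Y = d Y" using c1 c2 YS Y by auto
            thus ?thesis using hY g(1) t gstar_maj by auto
          next
            case 4
            hence "c1 Y = d Y" "c2 Y = d Y" "c3 Y = d Y" using c1 c2 c3 YS by auto
            thus ?thesis using hY g(1) t gstar_maj by auto
          qed
        qed
        thus ?thesis using hC by blast
      next
        case False
        hence "card S = 0 \<or> card S = 1 \<or> card S = 2" by linarith
        moreover
        { assume "card S = 0"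
          hence "S = {}" using finS by simp
          hence ?thesis using Cne by auto }
        moreover
        { assume "card S = 1"
          then obtain Y where "S = {Y}" using card_1_singletonE by blast
          moreover have "R Y Y (d Y) (d Y)" using unary dX S \<open>S = {Y}\<close> by auto
          ultimately have ?thesis by (auto simp: R_def) }
        moreover
        { assume "card S = 2"
          then obtain Y1 Y2 where "S = {Y1, Y2}" "Y1 \<noteq> Y2" using card_2_iff by metis
          moreover have "R Y1 Y2 (d Y1) (d Y2)" using pr S \<open>S = {Y1, Y2}\<close> \<open>Y1 \<noteq> Y2\<close> by auto
          ultimately have ?thesis by (auto simp: R_def) }
        ultimately show ?thesis by blast
      qed
    qed
  qed
  obtain c where c: "c \<in> C" "\<forall>Y\<in>binom X k. c Y = d Y" using main by blast
  have "c = d"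
  proof
    fix Y show "c Y = d Y"
      using c Cch d by (cases "Y \<in> binom X k") (auto simp: choice_fun_def)
  qed
  thus ?thesis using c by simp
qed

end

context cf begin

definition lev where "lev j Y1 Y2 \<longleftrightarrow> Y1 \<in> binom X k \<and> Y2 \<in> binom X k \<and> Y1 \<noteq> Y2 \<and> card (Y1 \<inter> Y2) = j"
definition "RE j \<longleftrightarrow> (\<forall>Y1 Y2 i. lev j Y1 Y2 \<longrightarrow> i \<in> Y1 \<inter> Y2 \<longrightarrow> R Y1 Y2 i i)"
definition "RN j \<longleftrightarrow> (\<forall>Y1 Y2 i i'. lev j Y1 Y2 \<longrightarrow> i \<in> Y1 \<inter> Y2 \<longrightarrow> i' \<in> Y1 \<inter> Y2 \<longrightarrow> i \<noteq> i' \<longrightarrow> R Y1 Y2 i i')"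
definition "RIB j \<longleftrightarrow> (\<forall>Y1 Y2 i b. lev j Y1 Y2 \<longrightarrow> i \<in> Y1 \<inter> Y2 \<longrightarrow> b \<in> Y2 - Y1 \<longrightarrow> R Y1 Y2 i b)"
definition "RAI j \<longleftrightarrow> (\<forall>Y1 Y2 a i. lev j Y1 Y2 \<longrightarrow> a \<in> Y1 - Y2 \<longrightarrow> i \<in> Y1 \<inter> Y2 \<longrightarrow> R Y1 Y2 a i)"
definition "RAB j \<longleftrightarrow> (\<forall>Y1 Y2 a b. lev j Y1 Y2 \<longrightarrow> a \<in> Y1 - Y2 \<longrightarrow> b \<in> Y2 - Y1 \<longrightarrow> R Y1 Y2 a b)"

lemma levswap: "lev j Y1 Y2 = lev j Y2 Y1"
  by (auto simp: lev_def Int_commute)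

lemma lev_facts:
  assumes "lev j Y1 Y2"
  shows "j < k" "card (Y1 - Y2) = k - j" "card (Y2 - Y1) = k - j" "card (Y1 \<inter> Y2) = j"
    "Y1 \<in> binom X k" "Y2 \<in> binom X k" "Y1 \<subseteq> X" "Y2 \<subseteq> X" "finite Y1" "finite Y2"
proof -
  have b: "Y1 \<subseteq> X" "Y2 \<subseteq> X" "card Y1 = k" "card Y2 = k" "Y1 \<noteq> Y2" "card (Y1 \<inter> Y2) = j"
    using assms binom_iff lev_def by auto
  have f: "finite Y1" "finite Y2" using b finX finite_subset by auto
  show "card (Y1 - Y2) = k - j" using card_Diff_subset_Int[of Y1 Y2] f b by simp
  show "card (Y2 - Y1) = k - j" using card_Diff_subset_Int[of Y2 Y1] f b by (simp add: Int_commute)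
  have "j \<le> k" using card_mono[OF f(1), of "Y1 \<inter> Y2"] b by auto
  moreover have "j \<noteq> k"
  proof
    assume "j = k"
    hence "Y1 \<inter> Y2 = Y1" "Y1 \<inter> Y2 = Y2" using card_subset_eq[OF f(1), of "Y1 \<inter> Y2"]
        card_subset_eq[OF f(2), of "Y1 \<inter> Y2"] b by auto
    thus False using b by auto
  qed
  ultimately show "j < k" by simp
  show "card (Y1 \<inter> Y2) = j" "Y1 \<in> binom X k" "Y2 \<in> binom X k" "Y1 \<subseteq> X" "Y2 \<subseteq> X" "finite Y1" "finite Y2"
    using assms f b by (auto simp: lev_def)
qed

lemma levI: "Z1 \<in> binom X k \<Longrightarrow> Z2 \<in> binom X k \<Longrightarrow> card (Z1 \<inter> Z2) = j \<Longrightarrow> j < k \<Longrightarrow> lev j Z1 Z2"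
  unfolding lev_def using binom_iff by auto

lemma ins_binom: "Y \<in> binom X k \<Longrightarrow> x \<in> Y \<Longrightarrow> a \<in> X \<Longrightarrow> a \<notin> Y \<Longrightarrow> insert a (Y - {x}) \<in> binom X k"
proof -
  assume a: "Y \<in> binom X k" "x \<in> Y" "a \<in> X" "a \<notin> Y"
  have "Y \<subseteq> X" "card Y = k" using a binom_iff by auto
  moreover have "finite Y" using calculation finX finite_subset by auto
  ultimately show ?thesis using a k5 by (auto simp: binom_iff card_insert_disjoint)
qed

lemma RAI_RIB: "RAI j = RIB j"
proof
  assume A: "RAI j"
  show "RIB j" unfolding RIB_def
  proof (intro allI impI)
    fix Y1 Y2 i b assume "lev j Y1 Y2" "i \<in> Y1 \<inter> Y2" "b \<in> Y2 - Y1"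
    hence "R Y2 Y1 b i" using A levswap unfolding RAI_def by blast
    thus "R Y1 Y2 i b" using Rswap by blast
  qed
next
  assume A: "RIB j"
  show "RAI j" unfolding RAI_def
  proof (intro allI impI)
    fix Y1 Y2 a i assume "lev j Y1 Y2" "a \<in> Y1 - Y2" "i \<in> Y1 \<inter> Y2"
    hence "R Y2 Y1 i a" using A levswap unfolding RIB_def by blast
    thus "R Y1 Y2 a i" using Rswap by blast
  qed
qed

lemma TRlev:
  assumes "lev j Y1 Y2" "lev j Z1 Z2" "c \<in> C"
    "y1 \<in> Y1" "y2 \<in> Y2" "(y1 \<in> Y2) = (c Z1 \<in> Z2)" "(y2 \<in> Y1) = (c Z2 \<in> Z1)" "(y1 = y2) = (c Z1 = c Z2)"
  shows "R Y1 Y2 y1 y2"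
proof -
  have b: "Z1 \<in> binom X k" "Z2 \<in> binom X k" using assms(2) lev_def by auto
  show ?thesis
    by (rule TR[of Y1 Y2 Z1 Z2 y1 y2 "c Z1" "c Z2"])
      (use assms cval[OF assms(3) b(1)] cval[OF assms(3) b(2)] in \<open>auto simp: lev_def R_def\<close>)
qed

lemma TAB: "lev j Z1 Z2 \<Longrightarrow> c \<in> C \<Longrightarrow> c Z1 \<notin> Z2 \<Longrightarrow> c Z2 \<notin> Z1 \<Longrightarrow> RAB j"
  unfolding RAB_def
proof (intro allI impI)
  fix Y1 Y2 a b assume a: "lev j Z1 Z2" "c \<in> C" "c Z1 \<notin> Z2" "c Z2 \<notin> Z1" "lev j Y1 Y2" "a \<in> Y1 - Y2" "b \<in> Y2 - Y1"
  have "c Z1 \<in> Z1" using cval a lev_def by auto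
  thus "R Y1 Y2 a b" by (intro TRlev[OF a(5) a(1) a(2)]) (use a in auto)
qed

lemma TAI: "lev j Z1 Z2 \<Longrightarrow> c \<in> C \<Longrightarrow> c Z1 \<notin> Z2 \<Longrightarrow> c Z2 \<in> Z1 \<Longrightarrow> RAI j"
  unfolding RAI_def
proof (intro allI impI)
  fix Y1 Y2 a i assume a: "lev j Z1 Z2" "c \<in> C" "c Z1 \<notin> Z2" "c Z2 \<in> Z1" "lev j Y1 Y2" "a \<in> Y1 - Y2" "i \<in> Y1 \<inter> Y2"
  have "c Z1 \<in> Z1" "c Z2 \<in> Z2" using cval a lev_def by auto
  thus "R Y1 Y2 a i" by (intro TRlev[OF a(5) a(1) a(2)]) (use a in auto)
qed

lemma TIB: "lev j Z1 Z2 \<Longrightarrow> c \<in> C \<Longrightarrow> c Z1 \<in> Z2 \<Longrightarrow> c Z2 \<notin> Z1 \<Longrightarrow> RIB j"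
  using TAI[of j Z2 Z1 c] levswap RAI_RIB by blast

lemma TE: "lev j Z1 Z2 \<Longrightarrow> c \<in> C \<Longrightarrow> c Z1 \<in> Z2 \<Longrightarrow> c Z2 = c Z1 \<Longrightarrow> RE j"
  unfolding RE_def
proof (intro allI impI)
  fix Y1 Y2 i assume a: "lev j Z1 Z2" "c \<in> C" "c Z1 \<in> Z2" "c Z2 = c Z1" "lev j Y1 Y2" "i \<in> Y1 \<inter> Y2"
  have "c Z1 \<in> Z1" "c Z2 \<in> Z2" using cval a lev_def by auto
  thus "R Y1 Y2 i i" by (intro TRlev[OF a(5) a(1) a(2)]) (use a in auto)
qed

lemma TN: "lev j Z1 Z2 \<Longrightarrow> c \<in> C \<Longrightarrow> c Z1 \<in> Z2 \<Longrightarrow> c Z2 \<in> Z1 \<Longrightarrow> c Z1 \<noteq> c Z2 \<Longrightarrow> RN j"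
  unfolding RN_def
proof (intro allI impI)
  fix Y1 Y2 i i' assume a: "lev j Z1 Z2" "c \<in> C" "c Z1 \<in> Z2" "c Z2 \<in> Z1" "c Z1 \<noteq> c Z2" "lev j Y1 Y2"
     "i \<in> Y1 \<inter> Y2" "i' \<in> Y1 \<inter> Y2" "i \<noteq> i'"
  have "c Z1 \<in> Z1" "c Z2 \<in> Z2" using cval a lev_def by auto
  thus "R Y1 Y2 i i'" by (intro TRlev[OF a(6) a(1) a(2)]) (use a in auto)
qed

lemma TEN: "lev j Z1 Z2 \<Longrightarrow> c \<in> C \<Longrightarrow> c Z1 \<in> Z2 \<Longrightarrow> c Z2 \<in> Z1 \<Longrightarrow> RE j \<or> RN j"
  using TE TN by metis

end

context cf begin

lemma R1: assumes "RAB j" "2 \<le> k - j" shows "RAI j"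
  unfolding RAI_def
proof (intro allI impI)
  fix Y1 Y2 a i assume a: "lev j Y1 Y2" "a \<in> Y1 - Y2" "i \<in> Y1 \<inter> Y2"
  obtain b b' where b: "b \<in> Y2 - Y1" "b' \<in> Y2 - Y1" "b \<noteq> b'"
    using two_elems[of "Y2 - Y1"] lev_facts(3)[OF a(1)] assms(2) by metis
  have "R Y1 Y2 a b" "R Y1 Y2 a b'" using assms(1) a b unfolding RAB_def by auto
  thus "R Y1 Y2 a i" using G1 lev_facts(5,6)[OF a(1)] b a(3) by blast
qed

lemma R2: assumes "RIB j" "2 \<le> k - j" shows "RE j" "RN j"
proof -
  have *: "R Y1 Y2 i i'" if a: "lev j Y1 Y2" "i \<in> Y1 \<inter> Y2" "i' \<in> Y1 \<inter> Y2" for Y1 Y2 i i'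
  proof -
    obtain b b' where b: "b \<in> Y2 - Y1" "b' \<in> Y2 - Y1" "b \<noteq> b'"
      using two_elems[of "Y2 - Y1"] lev_facts(3)[OF a(1)] assms(2) by metis
    have "R Y1 Y2 i b" "R Y1 Y2 i b'" using assms(1) a b unfolding RIB_def by auto
    thus "R Y1 Y2 i i'" using G1 lev_facts(5,6)[OF a(1)] b a(3) by blast
  qed
  show "RE j" "RN j" unfolding RE_def RN_def using * by auto
qed

lemma R3: assumes "RIB j" "2 \<le> j" shows "RAB j"
  unfolding RAB_def
proof (intro allI impI)
  fix Y1 Y2 a b assume a: "lev j Y1 Y2" "a \<in> Y1 - Y2" "b \<in> Y2 - Y1"
  obtain i i' where i: "i \<in> Y1 \<inter> Y2" "i' \<in> Y1 \<inter> Y2" "i \<noteq> i'"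
    using two_elems[of "Y1 \<inter> Y2"] lev_facts(4)[OF a(1)] assms(2) by metis
  have "R Y1 Y2 i b" "R Y1 Y2 i' b" using assms(1) a i unfolding RIB_def by auto
  thus "R Y1 Y2 a b" using G2 lev_facts(5,6)[OF a(1)] i a(2) by blast
qed

lemma R5: assumes "RN j" "3 \<le> j" shows "RE j" "RIB j"
proof -
  have *: "R Y1 Y2 i q" if a: "lev j Y1 Y2" "i \<in> Y1 \<inter> Y2" "q \<in> Y2" for Y1 Y2 i q
  proof -
    have "card (Y1 \<inter> Y2 - {i}) = j - 1" using lev_facts(4)[OF a(1)] a(2) by simp
    hence "2 \<le> card (Y1 \<inter> Y2 - {i})" using assms(2) by linarith
    then obtain i' i'' where i: "i' \<in> Y1 \<inter> Y2 - {i}" "i'' \<in> Y1 \<inter> Y2 - {i}" "i' \<noteq> i''"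
      by (rule two_elems)
    have "R Y1 Y2 i i'" "R Y1 Y2 i i''" using assms(1) a i unfolding RN_def by auto
    thus "R Y1 Y2 i q" using G1 lev_facts(5,6)[OF a(1)] i a(3) by blast
  qed
  show "RE j" "RIB j" unfolding RE_def RIB_def using * by auto
qed

lemma R6: assumes "RE j" "RIB j" shows "RN j"
  unfolding RN_def
proof (intro allI impI)
  fix Y1 Y2 i i' assume a: "lev j Y1 Y2" "i \<in> Y1 \<inter> Y2" "i' \<in> Y1 \<inter> Y2" "i \<noteq> i'"
  have "1 \<le> card (Y2 - Y1)" using lev_facts(1,3)[OF a(1)] by simp
  then obtain b where b: "b \<in> Y2 - Y1" by (rule one_elem)
  have "R Y1 Y2 i i" "R Y1 Y2 i b" using assms a b unfolding RE_def RIB_def by auto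
  moreover have "i \<noteq> b" using a b by auto
  ultimately show "R Y1 Y2 i i'" using G1 lev_facts(5,6)[OF a(1)] a(3) by blast
qed

end

context cf begin

lemma LAX_aux: "lev j Y1 Z2 \<Longrightarrow> c \<in> C \<Longrightarrow> c Y1 \<notin> Z2 \<Longrightarrow> RAI j \<or> RAB j"
  using TAI TAB by metis

lemma LAX: assumes L: "lev j Y1 Y2" shows "RAI j \<or> RAB j"
proof -
  obtain c where c: "c \<in> C" using Cne by auto
  show ?thesis
  proof (cases "c Y1 \<in> Y2")
    case False thus ?thesis using LAX_aux L c by blast
  next
    case True
    define x where "x = c Y1"
    have x: "x \<in> Y1" "x \<in> Y2" using True cval c lev_facts(5)[OF L] x_def by auto
    have "1 \<le> card (Y1 - Y2)" using lev_facts(1,2)[OF L] by simp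
    then obtain a where a: "a \<in> Y1 - Y2" by (rule one_elem)
    define Z2 where "Z2 = insert a (Y2 - {x})"
    have Z2B: "Z2 \<in> binom X k" unfolding Z2_def
      using ins_binom lev_facts(6,7)[OF L] a x by auto
    have "Y1 \<inter> Z2 = insert a (Y1 \<inter> Y2 - {x})" using a unfolding Z2_def by auto
    moreover have "0 < j" using lev_facts(4,9)[OF L] x card_gt_0_iff by blast
    moreover have "card (insert a (Y1 \<inter> Y2 - {x})) = j"
      using lev_facts(4,9)[OF L] x a calculation(2) by (simp add: card_insert_disjoint)
    ultimately have "lev j Y1 Z2" using levI lev_facts(1,5)[OF L] Z2B by auto
    moreover have "c Y1 \<notin> Z2" using a x unfolding Z2_def x_def by auto
    ultimately show ?thesis using LAX_aux c by blast
  qed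
qed

lemma lev1I: "Z1 \<in> binom X k \<Longrightarrow> Z2 \<in> binom X k \<Longrightarrow> Z1 \<inter> Z2 = {w} \<Longrightarrow> lev 1 Z1 Z2"
  by (rule levI) (use k5 in auto)

lemma L1AB: assumes L: "lev 1 Y1 Y2" shows "RAB 1"
proof (rule ccontr)
  assume nab: "\<not> RAB 1"
  obtain c where c: "c \<in> C" using Cne by auto
  have NAB: "c Z1 \<in> Z2 \<or> c Z2 \<in> Z1" if "lev 1 Z1 Z2" for Z1 Z2
    using TAB[OF that c] nab by blast
  have Y1B: "Y1 \<in> binom X k" and Y1X: "Y1 \<subseteq> X" and Y2X: "Y2 \<subseteq> X" and fY1: "finite Y1" and fY2: "finite Y2"
    using lev_facts[OF L] by auto
  define x where "x = c Y1"
  have x: "x \<in> Y1" using cval c Y1B x_def by auto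
  define V where "V = Y2 - Y1"
  have cV: "card V = k - 1" using lev_facts(3)[OF L] V_def by simp
  have fV: "finite V" using fY2 V_def by auto
  have VX: "V \<subseteq> X" using Y2X V_def by auto
  have VY1: "V \<inter> Y1 = {}" using V_def by auto
  have "1 \<le> card V" using cV k5 by simp
  then obtain u where u: "u \<in> V" by (rule one_elem)
  have "card (Y1 - {x}) = k - 1" using x lev_facts[OF L] by (simp add: binom_iff)
  hence "2 \<le> card (Y1 - {x})" using k5 by simp
  then obtain w1 w2 where w: "w1 \<in> Y1 - {x}" "w2 \<in> Y1 - {x}" "w1 \<noteq> w2" by (rule two_elems)
  have wX: "w1 \<in> X" "w2 \<in> X" "u \<in> X" using w u Y1X VX by auto
  have uY1: "u \<notin> Y1" using u VY1 by auto
  have wV: "w1 \<notin> V" "w2 \<notin> V" using w VY1 by auto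
  define S1 where "S1 = insert w1 V"
  define S2 where "S2 = insert w2 V"
  define A1 where "A1 = insert u (Y1 - {w1})"
  define A2 where "A2 = insert u (Y1 - {w2})"
  define Bs where "Bs = insert w1 (insert w2 (V - {u}))"
  have S1B: "S1 \<in> binom X k" "S2 \<in> binom X k"
    unfolding S1_def S2_def binom_iff using VX wX wV cV fV k5 by (auto simp: card_insert_disjoint)
  have A1B: "A1 \<in> binom X k" "A2 \<in> binom X k"
    unfolding A1_def A2_def using ins_binom Y1B w wX uY1 by auto
  have "card (V - {u}) = k - 2" using cV u by simp
  hence BsB: "Bs \<in> binom X k"
    unfolding Bs_def binom_iff using VX wX wV w(3) fV k5 by (auto simp: card_insert_disjoint)
  have i1: "Y1 \<inter> S1 = {w1}" "Y1 \<inter> S2 = {w2}" using w VY1 unfolding S1_def S2_def by auto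
  have i2: "S1 \<inter> A1 = {u}" "S2 \<inter> A2 = {u}" using w VY1 u unfolding S1_def S2_def A1_def A2_def by auto
  have i3: "A1 \<inter> Bs = {w2}" "A2 \<inter> Bs = {w1}" using w VY1 u unfolding Bs_def A1_def A2_def by auto
  have cS1: "c S1 = w1"
  proof -
    have "x \<notin> S1" using x w VY1 unfolding S1_def by auto
    hence "c S1 \<in> Y1" using NAB[OF lev1I[OF Y1B S1B(1) i1(1)]] x_def by auto
    moreover have "c S1 \<in> S1" using cval c S1B by auto
    ultimately show ?thesis using i1 by auto
  qed
  have cS2: "c S2 = w2"
  proof -
    have "x \<notin> S2" using x w VY1 unfolding S2_def by auto
    hence "c S2 \<in> Y1" using NAB[OF lev1I[OF Y1B S1B(2) i1(2)]] x_def by auto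
    moreover have "c S2 \<in> S2" using cval c S1B by auto
    ultimately show ?thesis using i1 by auto
  qed
  have cA1: "c A1 = u"
  proof -
    have "w1 \<notin> A1" using uY1 w unfolding A1_def by auto
    hence "c A1 \<in> S1" using NAB[OF lev1I[OF S1B(1) A1B(1) i2(1)]] cS1 by auto
    moreover have "c A1 \<in> A1" using cval c A1B by auto
    ultimately show ?thesis using i2 by auto
  qed
  have cA2: "c A2 = u"
  proof -
    have "w2 \<notin> A2" using uY1 w unfolding A2_def by auto
    hence "c A2 \<in> S2" using NAB[OF lev1I[OF S1B(2) A1B(2) i2(2)]] cS2 by auto
    moreover have "c A2 \<in> A2" using cval c A1B by auto
    ultimately show ?thesis using i2 by auto
  qed
  have uBs: "u \<notin> Bs" using uY1 w unfolding Bs_def by auto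
  have cBs: "c Bs \<in> Bs" using cval c BsB by auto
  have "c Bs \<in> A1" using NAB[OF lev1I[OF A1B(1) BsB i3(1)]] cA1 uBs by auto
  hence "c Bs = w2" using cBs i3 by auto
  moreover have "c Bs \<in> A2" using NAB[OF lev1I[OF A1B(2) BsB i3(2)]] cA2 uBs by auto
  hence "c Bs = w1" using cBs i3 by auto
  ultimately show False using w by simp
qed

lemma Lk1a: assumes L: "lev (k-1) Y1 Y2" shows "RE (k-1) \<or> RN (k-1)"
proof -
  obtain c where c: "c \<in> C" using Cne by auto
  have Y1B: "Y1 \<in> binom X k" and Y1X: "Y1 \<subseteq> X" and Y2X: "Y2 \<subseteq> X" and fY1: "finite Y1"
    and cY1: "card Y1 = k"
    using lev_facts[OF L] binom_iff by auto
  define x where "x = c Y1"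
  have x: "x \<in> Y1" using cval c Y1B x_def by auto
  have "1 \<le> card (Y2 - Y1)" using lev_facts(3)[OF L] k5 by simp
  then obtain b where b: "b \<in> Y2 - Y1" by (rule one_elem)
  have bX: "b \<in> X" using b Y2X by auto
  have "card (Y1 - {x}) = k - 1" using x cY1 by simp
  hence "2 \<le> card (Y1 - {x})" using k5 by simp
  then obtain a a' where a: "a \<in> Y1 - {x}" "a' \<in> Y1 - {x}" "a \<noteq> a'" by (rule two_elems)
  define Y' where "Y' = insert b (Y1 - {a})"
  define Y'' where "Y'' = insert b (Y1 - {a'})"
  have YB: "Y' \<in> binom X k" "Y'' \<in> binom X k" unfolding Y'_def Y''_def
    using ins_binom[OF Y1B] a bX b by auto
  have kk: "k - 1 < k" using k5 by simp
  have L1: "lev (k-1) Y1 Y'"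
  proof -
    have "Y1 \<inter> Y' = Y1 - {a}" using b unfolding Y'_def by auto
    thus ?thesis using levI[OF Y1B YB(1) _ kk] a cY1 by simp
  qed
  have L2: "lev (k-1) Y1 Y''"
  proof -
    have "Y1 \<inter> Y'' = Y1 - {a'}" using b unfolding Y''_def by auto
    thus ?thesis using levI[OF Y1B YB(2) _ kk] a cY1 by simp
  qed
  have L3: "lev (k-1) Y' Y''"
  proof -
    have e: "Y' \<inter> Y'' = insert b (Y1 - {a,a'})" unfolding Y'_def Y''_def by auto
    have "card (Y1 - {a,a'}) = k - 2" using a cY1 fY1 by (simp add: card_Diff_subset)
    hence "card (Y' \<inter> Y'') = k - 1" unfolding e using b fY1 k5 by (simp add: card_insert_disjoint)
    thus ?thesis using levI[OF YB _ kk] by simp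
  qed
  have xY': "x \<in> Y'" "x \<in> Y''" using x a unfolding Y'_def Y''_def by auto
  have cY': "c Y' \<in> Y'" "c Y'' \<in> Y''" using cval c YB by auto
  show ?thesis
  proof (cases "c Y' = b")
    case False
    hence "c Y' \<in> Y1" using cY' unfolding Y'_def by auto
    thus ?thesis using TEN[OF L1 c] xY' x_def by auto
  next
    case True
    show ?thesis
    proof (cases "c Y'' = b")
      case False
      hence "c Y'' \<in> Y1" using cY' unfolding Y''_def by auto
      thus ?thesis using TEN[OF L2 c] xY' x_def by auto
    next
      case T2: True
      have "b \<in> Y'" "b \<in> Y''" unfolding Y'_def Y''_def by auto
      thus ?thesis using TEN[OF L3 c] True T2 by auto
    qed
  qed
qed

lemma Lk1b: assumes L: "lev (k-1) Y1 Y2" shows "RN (k-1) \<or> RIB (k-1)"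
proof (rule ccontr)
  assume nn: "\<not> (RN (k-1) \<or> RIB (k-1))"
  obtain c where c: "c \<in> C" using Cne by auto
  have NF: "c Z2 = c Z1" if "lev (k-1) Z1 Z2" "c Z1 \<in> Z2" for Z1 Z2
    using TN[OF that(1) c that(2)] TIB[OF that(1) c that(2)] nn by metis
  have Y1B: "Y1 \<in> binom X k" and Y1X: "Y1 \<subseteq> X" and Y2X: "Y2 \<subseteq> X" and fY1: "finite Y1"
    and cY1: "card Y1 = k"
    using lev_facts[OF L] binom_iff by auto
  define x where "x = c Y1"
  have x: "x \<in> Y1" using cval c Y1B x_def by auto
  have "1 \<le> card (Y2 - Y1)" using lev_facts(3)[OF L] k5 by simp
  then obtain b where b: "b \<in> Y2 - Y1" by (rule one_elem)
  have bX: "b \<in> X" using b Y2X by auto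
  have "card (Y1 - {x}) = k - 1" using x cY1 by simp
  hence "1 \<le> card (Y1 - {x})" using k5 by simp
  then obtain a where a: "a \<in> Y1 - {x}" by (rule one_elem)
  define Y' where "Y' = insert b (Y1 - {a})"
  define W where "W = insert b (Y1 - {x})"
  have YB: "Y' \<in> binom X k" "W \<in> binom X k" unfolding Y'_def W_def
    using ins_binom[OF Y1B] a x bX b by auto
  have kk: "k - 1 < k" using k5 by simp
  have L1: "lev (k-1) Y1 Y'"
  proof -
    have "Y1 \<inter> Y' = Y1 - {a}" using b unfolding Y'_def by auto
    thus ?thesis using levI[OF Y1B YB(1) _ kk] a cY1 by simp
  qed
  have L2: "lev (k-1) W Y1"
  proof -
    have "W \<inter> Y1 = Y1 - {x}" using b unfolding W_def by auto
    thus ?thesis using levI[OF YB(2) Y1B _ kk] x cY1 by simp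
  qed
  have L3: "lev (k-1) W Y'"
  proof -
    have e: "W \<inter> Y' = insert b (Y1 - {x,a})" unfolding Y'_def W_def by auto
    have "x \<noteq> a" using a by auto
    hence "card (Y1 - {x,a}) = k - 2" using a x cY1 fY1 by (simp add: card_Diff_subset)
    hence "card (W \<inter> Y') = k - 1" unfolding e using b fY1 k5 by (simp add: card_insert_disjoint)
    thus ?thesis using levI[OF YB(2) YB(1) _ kk] by simp
  qed
  have "x \<in> Y'" using x a unfolding Y'_def by auto
  hence cY': "c Y' = x" using NF[OF L1] x_def by auto
  have xW: "x \<notin> W" using b x unfolding W_def by auto
  have "c W \<notin> Y1"
  proof
    assume "c W \<in> Y1"
    hence "c Y1 = c W" using NF[OF L2] by auto
    thus False using xW cval[OF c YB(2)] x_def by auto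
  qed
  hence "c W = b" using cval[OF c YB(2)] unfolding W_def by auto
  moreover have "b \<in> Y'" unfolding Y'_def by auto
  ultimately have "c Y' = b" using NF[OF L3] by auto
  thus False using cY' b x by auto
qed

lemma full_lev: assumes L: "lev j Y1 Y2" shows "RE j \<and> RN j \<and> RIB j \<and> RAI j \<and> RAB j"
proof -
  have jk: "j < k" using lev_facts(1)[OF L] .
  consider "j = 0" | "j = 1" | "2 \<le> j \<and> j \<le> k - 2" | "j = k - 1" using jk by linarith
  thus ?thesis
  proof cases
    case 1
    have emp: "Z1 \<inter> Z2 = {}" if "lev j Z1 Z2" for Z1 Z2
      using lev_facts(4,9)[OF that] 1 by auto
    obtain c where c: "c \<in> C" using Cne by auto
    have "c Y1 \<notin> Y2" "c Y2 \<notin> Y1" using cval[OF c] lev_facts(5,6)[OF L] emp[OF L] by auto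
    hence "RAB j" using TAB[OF L c] by blast
    moreover have "RE j" "RN j" "RIB j" "RAI j" using emp unfolding RE_def RN_def RIB_def RAI_def by auto
    ultimately show ?thesis by blast
  next
    case 2
    have ab: "RAB j" using L1AB L 2 by simp
    have "2 \<le> k - j" using 2 k5 by simp
    hence "RAI j" using R1 ab by blast
    hence "RIB j" using RAI_RIB by simp
    thus ?thesis using R2 \<open>2 \<le> k - j\<close> ab \<open>RAI j\<close> by blast
  next
    case 3
    have "2 \<le> k - j" using 3 k5 by linarith
    hence "RAI j" using LAX[OF L] R1 by blast
    hence ib: "RIB j" using RAI_RIB by simp
    thus ?thesis using R2 R3 \<open>2 \<le> k - j\<close> 3 \<open>RAI j\<close> by blast
  next
    case 4
    have j3: "3 \<le> j" using 4 k5 by simp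
    have a: "RE j \<or> RN j" using Lk1a L 4 by simp
    have b: "RN j \<or> RIB j" using Lk1b L 4 by simp
    have "RN j \<and> RE j \<and> RIB j" using a b R5[OF _ j3] R6 by blast
    moreover hence "RAI j" using RAI_RIB by simp
    moreover have "RAB j" using R3 calculation j3 by simp
    ultimately show ?thesis by blast
  qed
qed

lemma pairfull:
  assumes "Y1 \<in> binom X k" "Y2 \<in> binom X k" "Y1 \<noteq> Y2" "y1 \<in> Y1" "y2 \<in> Y2"
  shows "R Y1 Y2 y1 y2"
proof -
  have L: "lev (card (Y1 \<inter> Y2)) Y1 Y2" using assms by (simp add: lev_def)
  note F = full_lev[OF L]
  show ?thesis
  proof (cases "y1 \<in> Y2")
    case True
    show ?thesis
    proof (cases "y2 \<in> Y1")
      case T2: True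
      show ?thesis
      proof (cases "y1 = y2")
        case True thus ?thesis using F L assms T2 unfolding RE_def by auto
      next
        case False thus ?thesis using F L assms T2 \<open>y1 \<in> Y2\<close> unfolding RN_def by auto
      qed
    next
      case False thus ?thesis using F L assms True unfolding RIB_def by auto
    qed
  next
    case False
    show ?thesis
    proof (cases "y2 \<in> Y1")
      case True thus ?thesis using F L assms False unfolding RAI_def by auto
    next
      case F2: False thus ?thesis using F L assms False unfolding RAB_def by auto
    qed
  qed
qed

theorem full: "full_family X k C"
  unfolding full_family_def
proof (intro allI impI)
  fix d assume d: "choice_fun X k d"
  show "d \<in> C"
  proof (rule BP[OF d])
    fix Y1 Y2 assume "Y1 \<in> binom X k" "Y2 \<in> binom X k" "Y1 \<noteq> Y2"
    thus "R Y1 Y2 (d Y1) (d Y2)" using pairfull d unfolding choice_fun_def by auto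
  qed
qed

end

lemma closed3:
  assumes "closed_under X k C (3, g)" "c1 \<in> C" "c2 \<in> C" "c3 \<in> C"
  shows "(\<lambda>Y. if Y \<in> binom X k then g [c1 Y, c2 Y, c3 Y] else undefined) \<in> C"
proof -
  have "length [c1, c2, c3] = fst (3::nat, g) \<and> set [c1, c2, c3] \<subseteq> C" using assms by simp
  hence "(\<lambda>Y. if Y \<in> binom X k then snd (3::nat, g) (map (\<lambda>c. c Y) [c1, c2, c3]) else undefined) \<in> C"
    using assms(1) unfolding closed_under_def by blast
  moreover have "(\<lambda>Y. if Y \<in> binom X k then snd (3::nat, g) (map (\<lambda>c. c Y) [c1, c2, c3]) else undefined)
     = (\<lambda>Y. if Y \<in> binom X k then g [c1 Y, c2 Y, c3 Y] else undefined)"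
    by (rule ext) simp
  ultimately show ?thesis by simp
qed

lemma distinct3: "a \<in> tuples X 3 \<Longrightarrow> distinct a \<Longrightarrow> a ! 1 \<noteq> a ! 2"
  by (auto simp: tuples_def nth_eq_iff_index_eq)

theorem claim12p2:
  fixes X :: "'a set" and k :: nat
    and F :: "(nat \<times> ('a list \<Rightarrow> 'a)) set"
    and C :: "('a set \<Rightarrow> 'a) set"
  assumes "finite X" and "k \<ge> 5" and "k + 7 \<le> card X"
    and "clone_on X F"
    and "(\<exists>g. (3, g) \<in> F \<and> (\<forall>xs \<in> tuples X 3. g xs = gstar xs))
         \<or> (\<forall>a \<in> tuples X 3. distinct a \<longrightarrow>
              (\<exists>g. (3, g) \<in> F \<and> g a = a ! 0 \<and>
                   (\<forall>b \<in> tuples X 3. \<not> distinct b \<longrightarrow> g b = gstar b)))"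
    and "C \<noteq> {}" and "\<forall>c \<in> C. choice_fun X k c"
    and "symmetric_family X k C"
    and "\<forall>f \<in> F. closed_under X k C f"
  shows "full_family X k C"
proof -
  have "3 \<le> card X" using assms(2,3) by linarith
  then obtain p q r where pqr: "p \<in> X" "q \<in> X" "r \<in> X" "p \<noteq> q" "q \<noteq> r" "p \<noteq> r"
    by (rule three_elems)
  have t0: "[p,q,r] \<in> tuples X 3" "distinct [p,q,r]" using pqr by (auto simp: tuples_def)
  have maj: "\<exists>g. (distinct a \<longrightarrow> g a = a!0)
        \<and> (\<forall>b\<in>tuples X 3. \<not> distinct b \<longrightarrow> g b = gstar b)
        \<and> (\<forall>c1\<in>C. \<forall>c2\<in>C. \<forall>c3\<in>C. (\<lambda>Y. if Y \<in> binom X k then g [c1 Y, c2 Y, c3 Y] else undefined) \<in> C)"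
    if a: "a \<in> tuples X 3" for a
  proof -
    have cl: "\<forall>c1\<in>C. \<forall>c2\<in>C. \<forall>c3\<in>C. (\<lambda>Y. if Y \<in> binom X k then g [c1 Y, c2 Y, c3 Y] else undefined) \<in> C"
      if "(3, g) \<in> F" for g
      using closed3 assms(9) that by blast
    from assms(5) show ?thesis
    proof
      assume "\<exists>g. (3, g) \<in> F \<and> (\<forall>xs \<in> tuples X 3. g xs = gstar xs)"
      then obtain g where g: "(3, g) \<in> F" "\<forall>xs \<in> tuples X 3. g xs = gstar xs" by blast
      have "distinct a \<longrightarrow> g a = a!0" using g(2) a distinct3[OF a] by (auto simp: gstar_def)
      thus ?thesis using g cl[OF g(1)] by blast
    next
      assume H: "\<forall>a \<in> tuples X 3. distinct a \<longrightarrow>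
              (\<exists>g. (3, g) \<in> F \<and> g a = a ! 0 \<and>
                   (\<forall>b \<in> tuples X 3. \<not> distinct b \<longrightarrow> g b = gstar b))"
      show ?thesis
      proof (cases "distinct a")
        case True
        then obtain g where g: "(3, g) \<in> F" "g a = a ! 0" "\<forall>b \<in> tuples X 3. \<not> distinct b \<longrightarrow> g b = gstar b"
          using H a by blast
        thus ?thesis using cl[OF g(1)] by blast
      next
        case False
        obtain g where g: "(3, g) \<in> F" "\<forall>b \<in> tuples X 3. \<not> distinct b \<longrightarrow> g b = gstar b"
          using H t0 by blast
        thus ?thesis using cl[OF g(1)] False by blast
      qed
    qed
  qed
  interpret cf X k C
    by unfold_locales (use assms maj in auto)
  show ?thesis by (rule full)
qed

end
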